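(* Let $(A_k,b_k,c_k)_{k\in\mathbb{Z}}$ and $(\tilde A_k,\tilde b_k,\tilde c_k)_{k\in\mathbb{Z}}$ be algebraically equivalent discrete-time systems, with $(\tilde A_k,\tilde b_k,\tilde c_k)$ in controller canonical form. Then for every $k\in\mathbb{Z}$, the first coordinate of $\tilde c_k$ is zero if and only if $c_k\operatorname{adj}(A_k)b_k=0$.
   Context: A system $(A_k,b_k,c_k)$ means $x_{k+1}=A_kx_k+b_ku_k$, $y_k=c_kx_k$ with $A_k\in\mathbb{R}^{n\times n}$, $b_k\in\mathbb{R}^{n\times1}$, $c_k\in\mathbb{R}^{1\times n}$. Algebraic equivalence: there are invertible $T_k$ with $\tilde A_k=T_{k+1}A_kT_k^{-1}$, $\tilde b_k=T_{k+1}b_k$, $\tilde c_k=c_kT_k^{-1}$ for all $k$. Controller canonical form: $\tilde b_k=(0,\dots,0,1)^T$ and $\tilde A_k$ has ones on the superdiagonal, zeros elsewhere in the first $n-1$ rows, and an arbitrary last row. $\operatorname{adj}$ denotes the adjugate matrix. *)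

theory Defs
  imports "Jordan_Normal_Form.Determinant"
begin

definition is_system :: "nat \<Rightarrow> (int \<Rightarrow> real mat) \<Rightarrow> (int \<Rightarrow> real mat) \<Rightarrow> (int \<Rightarrow> real mat) \<Rightarrow> bool" where
  "is_system n A b c \<longleftrightarrow>
     (\<forall>k. A k \<in> carrier_mat n n \<and> b k \<in> carrier_mat n 1 \<and> c k \<in> carrier_mat 1 n)"

definition alg_equiv :: "nat \<Rightarrow> (int \<Rightarrow> real mat) \<Rightarrow> (int \<Rightarrow> real mat) \<Rightarrow> (int \<Rightarrow> real mat)
    \<Rightarrow> (int \<Rightarrow> real mat) \<Rightarrow> (int \<Rightarrow> real mat) \<Rightarrow> (int \<Rightarrow> real mat) \<Rightarrow> bool" where
  "alg_equiv n A b c At bt ct \<longleftrightarrow>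
     (\<exists>T Ti :: int \<Rightarrow> real mat. \<forall>k.
        T k \<in> carrier_mat n n \<and> Ti k \<in> carrier_mat n n \<and>
        T k * Ti k = 1\<^sub>m n \<and> Ti k * T k = 1\<^sub>m n \<and>
        At k = T (k + 1) * A k * Ti k \<and>
        bt k = T (k + 1) * b k \<and>
        ct k = c k * Ti k)"

text \<open>Controller canonical form (indices 0-based): bt k = (0,...,0,1)^T and
At k has ones on the superdiagonal and zeros elsewhere in its first n-1 rows;
the last row is arbitrary.\<close>

definition controller_canonical :: "nat \<Rightarrow> (int \<Rightarrow> real mat) \<Rightarrow> (int \<Rightarrow> real mat) \<Rightarrow> bool" where
  "controller_canonical n At bt \<longleftrightarrow>
     (\<forall>k. (\<forall>i<n. bt k $$ (i, 0) = (if i = n - 1 then 1 else 0)) \<and>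
          (\<forall>i<n - 1. \<forall>j<n. At k $$ (i, j) = (if j = i + 1 then 1 else 0)))"

end

theory Submission
  imports Defs
begin

definition bord :: "real mat \<Rightarrow> real mat \<Rightarrow> real mat \<Rightarrow> real mat" where
  "bord A b c = four_block_mat A b c (0\<^sub>m 1 1)"

lemma cab_expand:
  assumes A: "A \<in> carrier_mat n n" and b: "b \<in> carrier_mat n 1" and c: "c \<in> carrier_mat 1 n"
  shows "(c * adj_mat A * b) $$ (0,0) = (\<Sum>j<n. \<Sum>i<n. c $$ (0,j) * b $$ (i,0) * cofactor A i j)"
proof -
  have adj: "adj_mat A \<in> carrier_mat n n" using adj_mat(1)[OF A] .
  have ca: "c * adj_mat A \<in> carrier_mat 1 n" using c adj by auto
  have "(c * adj_mat A * b) $$ (0,0) = (\<Sum>i<n. (c * adj_mat A) $$ (0,i) * b $$ (i,0))"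
  proof -
    have rw: "\<And>x. x<n \<Longrightarrow> row (c*adj_mat A) 0 $ x = (c*adj_mat A) $$ (0,x)"
      by (rule index_row(1)) (use ca in auto)
    have "(c * adj_mat A * b) $$ (0,0) = row (c * adj_mat A) 0 \<bullet> col b 0"
      by (rule index_mult_mat(1), use ca b in auto)
    also have "\<dots> = (\<Sum>i<n. (c * adj_mat A) $$ (0,i) * b $$ (i,0))"
      using ca b rw by (auto simp: scalar_prod_def atLeast0LessThan carrier_matD intro!: sum.cong)
    finally show ?thesis .
  qed
  also have "\<dots> = (\<Sum>i<n. (\<Sum>j<n. c $$ (0,j) * cofactor A i j) * b $$ (i,0))"
    using A b c adj by (auto simp: scalar_prod_def adj_mat_def atLeast0LessThan intro!: sum.cong)
  also have "\<dots> = (\<Sum>i<n. \<Sum>j<n. c $$ (0,j) * b $$ (i,0) * cofactor A i j)"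
    by (simp add: sum_distrib_right sum_distrib_left mult_ac)
  also have "\<dots> = (\<Sum>j<n. \<Sum>i<n. c $$ (0,j) * b $$ (i,0) * cofactor A i j)"
    by (rule sum.swap)
  finally show ?thesis .
qed

lemma bord_det:
  assumes A: "A \<in> carrier_mat n n" and b: "b \<in> carrier_mat n 1" and c: "c \<in> carrier_mat 1 n"
    and n: "n \<ge> 1"
  shows "det (bord A b c) = - (c * adj_mat A * b) $$ (0,0)"
proof -
  let ?M = "bord A b c"
  have M: "?M \<in> carrier_mat (Suc n) (Suc n)" using A b c unfolding bord_def by auto
  have Mi: "\<And>i j. i < Suc n \<Longrightarrow> j < Suc n \<Longrightarrow> ?M $$ (i,j) =
     (if i < n then if j < n then A $$ (i,j) else b $$ (i, 0) else if j < n then c $$ (0,j) else 0)"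
    using A b c unfolding bord_def by auto
  have "det ?M = (\<Sum>j<Suc n. ?M $$ (n,j) * cofactor ?M n j)"
    by (rule laplace_expansion_row[OF M], simp)
  also have "\<dots> = (\<Sum>j<n. c $$ (0,j) * cofactor ?M n j)"
    by (simp add: Mi)
  also have "\<dots> = (\<Sum>j<n. \<Sum>i<n. c $$ (0,j) * b $$ (i,0) * (- cofactor A i j))"
  proof (rule sum.cong[OF refl])
    fix j assume j: "j \<in> {..<n}"
    define D where "D = mat_delete ?M n j"
    have D: "D \<in> carrier_mat n n" unfolding D_def using M by (auto simp: mat_delete_def)
    have Di: "\<And>i' j'. i' < n \<Longrightarrow> j' < n \<Longrightarrow> D $$ (i',j') = ?M $$ (i', if j' < j then j' else Suc j')"
      unfolding D_def mat_delete_def using M by auto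
    have detD: "det D = (\<Sum>i<n. D $$ (i, n-1) * cofactor D i (n-1))"
      by (rule laplace_expansion_column[OF D], use n in simp)
    have del: "mat_delete D i (n - Suc 0) = mat_delete A i j" if i: "i < n" for i
    proof (rule eq_matI)
      fix i' j' assume "i' < dim_row (mat_delete A i j)" "j' < dim_col (mat_delete A i j)"
      then have ij': "i' < n - 1" "j' < n - 1" using A by auto
      show "mat_delete D i (n - Suc 0) $$ (i', j') = mat_delete A i j $$ (i', j')"
        using ij' j D A unfolding mat_delete_def
        by (auto simp: Di Mi)
    qed (use D A in auto)
    have "det D = (\<Sum>i<n. b $$ (i,0) * ((-1)^(i+(n-1)) * det (mat_delete A i j)))"
      unfolding detD cofactor_def
      by (rule sum.cong[OF refl], use j n in \<open>auto simp: Di Mi del\<close>)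
    then have "cofactor ?M n j = (-1)^(n+j) * (\<Sum>i<n. b $$ (i,0) * ((-1)^(i+(n-1)) * det (mat_delete A i j)))"
      unfolding cofactor_def D_def by simp
    also have "\<dots> = (\<Sum>i<n. b $$ (i,0) * (- cofactor A i j))"
    proof -
      obtain m where m: "n = Suc m" using n by (cases n) auto
      have "\<And>i. (-1::real)^(n+j) * (-1)^(i+(n-1)) = - ((-1)^(i+j))"
        by (simp add: m power_add)
      then show ?thesis unfolding cofactor_def sum_distrib_left
        by (intro sum.cong refl) (metis (no_types, lifting) mult.assoc mult.left_commute mult_minus_left mult_minus_right)
    qed
    finally show "c $$ (0,j) * cofactor ?M n j = (\<Sum>i<n. c $$ (0,j) * b $$ (i,0) * (- cofactor A i j))"
      by (simp add: sum_distrib_left mult_ac)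
  qed
  also have "\<dots> = - (c * adj_mat A * b) $$ (0,0)"
    unfolding cab_expand[OF A b c] by (simp add: sum_negf)
  finally show ?thesis .
qed


definition blk :: "nat \<Rightarrow> real mat \<Rightarrow> real mat" where
  "blk n P = four_block_mat P (0\<^sub>m n 1) (0\<^sub>m 1 n) (1\<^sub>m 1)"

lemma blk_det: assumes P: "P \<in> carrier_mat n n" shows "det (blk n P) = det P"
  unfolding blk_def
  by (subst det_four_block_mat_upper_right_zero[OF P refl]) auto

lemma blk_carrier: assumes P: "P \<in> carrier_mat n n" shows "blk n P \<in> carrier_mat (n+1) (n+1)"
  unfolding blk_def using P by auto

lemma bord_transform:
  assumes P: "P \<in> carrier_mat n n" and Q: "Q \<in> carrier_mat n n"
    and A: "A \<in> carrier_mat n n" and b: "b \<in> carrier_mat n 1" and c: "c \<in> carrier_mat 1 n"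
  shows "bord (P*A*Q) (P*b) (c*Q) = blk n P * bord A b c * blk n Q"
proof -
  have "blk n P * bord A b c = four_block_mat (P*A + 0\<^sub>m n 1 * c) (P*b + 0\<^sub>m n 1 * 0\<^sub>m 1 1)
     (0\<^sub>m 1 n * A + 1\<^sub>m 1 * c) (0\<^sub>m 1 n * b + 1\<^sub>m 1 * 0\<^sub>m 1 1)"
    unfolding blk_def bord_def
    by (rule mult_four_block_mat) (use P A b c in auto)
  also have "\<dots> = four_block_mat (P*A) (P*b) c (0\<^sub>m 1 1)"
    using P A b c by simp
  finally have 1: "blk n P * bord A b c = four_block_mat (P*A) (P*b) c (0\<^sub>m 1 1)" .
  have "four_block_mat (P*A) (P*b) c (0\<^sub>m 1 1) * blk n Q =
     four_block_mat (P*A*Q + P*b * 0\<^sub>m 1 n) (P*A * 0\<^sub>m n 1 + P*b * 1\<^sub>m 1)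
     (c*Q + 0\<^sub>m 1 1 * 0\<^sub>m 1 n) (c * 0\<^sub>m n 1 + 0\<^sub>m 1 1 * 1\<^sub>m 1)"
    unfolding blk_def
    by (rule mult_four_block_mat) (use P A b c Q in auto)
  also have "\<dots> = bord (P*A*Q) (P*b) (c*Q)"
    unfolding bord_def using P A b c Q by simp
  finally show ?thesis using 1 by simp
qed

lemma canon_val:
  assumes At: "At \<in> carrier_mat n n" and bt: "bt \<in> carrier_mat n 1" and ct: "ct \<in> carrier_mat 1 n"
    and n: "n \<ge> 1"
    and hb: "\<forall>i<n. bt $$ (i, 0) = (if i = n - 1 then 1 else 0)"
    and hA: "\<forall>i<n - 1. \<forall>j<n. At $$ (i, j) = (if j = i + 1 then 1 else 0)"
  shows "(ct * adj_mat At * bt) $$ (0,0) = (-1)^(n-1) * ct $$ (0,0)"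
proof -
  have cof: "cofactor At (n - Suc 0) j = (if j = 0 then (-1)^(n - Suc 0) else 0)" if j: "j < n" for j
  proof (cases "j = 0")
    case True
    have "mat_delete At (n-1) 0 = 1\<^sub>m (n-1)"
      by (rule eq_matI) (use At hA in \<open>auto simp: mat_delete_def\<close>)
    then show ?thesis using True by (simp add: cofactor_def)
  next
    case False
    have D: "mat_delete At (n-1) j \<in> carrier_mat (n-1) (n-1)"
      using At by (auto simp: mat_delete_def)
    have "det (mat_delete At (n-1) j) = (\<Sum>i<n-1. mat_delete At (n-1) j $$ (i,0) * cofactor (mat_delete At (n-1) j) i 0)"
      by (rule laplace_expansion_column[OF D]) (use False j in auto)
    also have "\<dots> = 0"
      by (rule sum.neutral) (use At hA False j in \<open>auto simp: mat_delete_def\<close>)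
    finally show ?thesis using False by (simp add: cofactor_def)
  qed
  have "(ct * adj_mat At * bt) $$ (0,0) = (\<Sum>j<n. \<Sum>i<n. ct $$ (0,j) * bt $$ (i,0) * cofactor At i j)"
    by (rule cab_expand[OF At bt ct])
  also have "\<dots> = (\<Sum>j<n. ct $$ (0,j) * cofactor At (n-1) j)"
  proof (rule sum.cong[OF refl])
    fix j assume "j \<in> {..<n}"
    have "(\<Sum>i<n. ct $$ (0,j) * bt $$ (i,0) * cofactor At i j) =
          (\<Sum>i<n. if i = n - 1 then ct $$ (0,j) * cofactor At i j else 0)"
      by (rule sum.cong) (use hb in auto)
    also have "\<dots> = ct $$ (0,j) * cofactor At (n-1) j"
      using n by (simp add: sum.delta)
    finally show "(\<Sum>i<n. ct $$ (0,j) * bt $$ (i,0) * cofactor At i j) = ct $$ (0,j) * cofactor At (n-1) j" .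
  qed
  also have "\<dots> = (\<Sum>j<n. if j = 0 then ct $$ (0,j) * (-1)^(n-1) else 0)"
    by (rule sum.cong) (auto simp: cof)
  also have "\<dots> = (-1)^(n-1) * ct $$ (0,0)"
    using n by (simp add: sum.delta)
  finally show ?thesis .
qed

theorem proposition7:
  fixes n :: nat and A b c At bt ct :: "int \<Rightarrow> real mat"
  assumes "n \<ge> 1"
    and "is_system n A b c" and "is_system n At bt ct"
    and "alg_equiv n A b c At bt ct"
    and "controller_canonical n At bt"
  shows "\<forall>k. ct k $$ (0, 0) = 0 \<longleftrightarrow> (c k * adj_mat (A k) * b k) $$ (0, 0) = 0"
proof
  fix k
  obtain T Ti where TT: "\<And>k. T k \<in> carrier_mat n n \<and> Ti k \<in> carrier_mat n n \<and>
        T k * Ti k = 1\<^sub>m n \<and> Ti k * T k = 1\<^sub>m n \<and>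
        At k = T (k + 1) * A k * Ti k \<and> bt k = T (k + 1) * b k \<and> ct k = c k * Ti k"
    using assms(4) unfolding alg_equiv_def by blast
  have S: "A k \<in> carrier_mat n n" "b k \<in> carrier_mat n 1" "c k \<in> carrier_mat 1 n"
    using assms(2) unfolding is_system_def by auto
  have St: "At k \<in> carrier_mat n n" "bt k \<in> carrier_mat n 1" "ct k \<in> carrier_mat 1 n"
    using assms(3) unfolding is_system_def by auto
  have CC: "\<forall>i<n. bt k $$ (i, 0) = (if i = n - 1 then 1 else 0)"
    "\<forall>i<n - 1. \<forall>j<n. At k $$ (i, j) = (if j = i + 1 then 1 else 0)"
    using assms(5) unfolding controller_canonical_def by auto
  have detnz: "det (T j) \<noteq> 0" "det (Ti j) \<noteq> 0" for j
  proof -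
    have "det (T j) * det (Ti j) = 1"
      using det_mult[of "T j" n "Ti j"] TT[of j] by simp
    then show "det (T j) \<noteq> 0" "det (Ti j) \<noteq> 0" by auto
  qed
  let ?P = "T (k+1)" and ?Q = "Ti k"
  have P: "?P \<in> carrier_mat n n" and Q: "?Q \<in> carrier_mat n n" using TT by auto
  have eq: "bord (At k) (bt k) (ct k) = blk n ?P * bord (A k) (b k) (c k) * blk n ?Q"
    using TT[of k] bord_transform[OF P Q S] by simp
  have Bc: "bord (A k) (b k) (c k) \<in> carrier_mat (n+1) (n+1)"
    unfolding bord_def using S by auto
  have "det (bord (At k) (bt k) (ct k)) = det ?P * det (bord (A k) (b k) (c k)) * det ?Q"
    unfolding eq
    using det_mult[OF mult_carrier_mat[OF blk_carrier[OF P] Bc] blk_carrier[OF Q]]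
      det_mult[OF blk_carrier[OF P] Bc] blk_det[OF P] blk_det[OF Q] by simp
  then have "det (bord (At k) (bt k) (ct k)) = 0 \<longleftrightarrow> det (bord (A k) (b k) (c k)) = 0"
    using detnz by auto
  then have "(ct k * adj_mat (At k) * bt k) $$ (0,0) = 0 \<longleftrightarrow> (c k * adj_mat (A k) * b k) $$ (0, 0) = 0"
    using bord_det[OF S assms(1)] bord_det[OF St assms(1)] by simp
  moreover have "(ct k * adj_mat (At k) * bt k) $$ (0,0) = (-1)^(n-1) * ct k $$ (0,0)"
    by (rule canon_val[OF St assms(1) CC])
  ultimately show "ct k $$ (0, 0) = 0 \<longleftrightarrow> (c k * adj_mat (A k) * b k) $$ (0, 0) = 0"
    by simp
qed

end
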